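(* Let $m,n\ge 1$ and let $x_1,\dots,x_m\in\{0,1\}^n$ be arbitrary input vectors. Run the Triangular Basis Algorithm (described in the context) on these inputs, and for each $i\in\{1,\dots,n\}$ define \[\beta_i = 0^{i-1}\,\Vert\,\overline{av_i}\,\Vert\, b_i[(i+1)..n]\in\{0,1\}^n,\] where $av_i$ and $b_i[(i+1)..n]$ are the values at the end of the algorithm and $\overline{av_i}=1\oplus av_i$. Then the $\mathbb{F}_2$-linear span of the original input vectors $x_1,\dots,x_m$ equals the $\mathbb{F}_2$-linear span of $\beta_1,\dots,\beta_n$.
   Context: All arithmetic is over $\mathbb{F}_2$ ($+$ is XOR, $\wedge$ is AND). For a vector $v\in\{0,1\}^n$, $v[i]$ is its $i$-th bit and $v[a..b]$ the substring of bits $a$ through $b$ (empty if $a>b$); $\Vert$ is concatenation. Triangular Basis Algorithm. Input: $x_1,\dots,x_m\in\{0,1\}^n$ (modified in place). Auxiliary variables: bits $\mathrm{used}_j$ ($1\le j\le m$) initialized to $0$; bits $av_i$ ($1\le i\le n$) initialized to $1$; strings $b_i[(i+1)..n]$ ($1\le i\le n$) initialized to all zeros. The algorithm executes, for $i=1,\dots,n$ (outer loop) and, inside it, for $j=1,\dots,m$ (inner loop), the following four steps in order (iteration $(i,j)$): (1) $\mathrm{used}_j \leftarrow \mathrm{used}_j + (x_j[i]\wedge av_i)$; (2) $av_i\leftarrow av_i + (x_j[i]\wedge \mathrm{used}_j)$ (using the value of $\mathrm{used}_j$ just updated); (3) if $\mathrm{used}_j=1$: $b_i[(i+1)..n]\leftarrow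 b_i[(i+1)..n]+x_j[(i+1)..n]$; (4) if $x_j[i]=1$: $x_j[(i+1)..n]\leftarrow x_j[(i+1)..n]+b_i[(i+1)..n]$. *)

theory Defs
  imports Complex_Main "HOL-Library.Z2" "HOL-Library.Function_Algebras"
begin

text \<open>Vectors in {0,1}^n are modelled as functions nat => bit whose support lies in {1..n};
 addition of bit is XOR and multiplication is AND.\<close>

type_synonym vec = "nat \<Rightarrow> bit"

record tb_state =
  xs   :: "nat \<Rightarrow> vec"
  used :: "nat \<Rightarrow> bit"
  av   :: "nat \<Rightarrow> bit"
  bs   :: "nat \<Rightarrow> vec"          \<comment> \<open>b_i, only coordinates (i+1)..n are meaningful\<close>

definition tb_step :: "nat \<Rightarrow> nat \<Rightarrow> nat \<Rightarrow> tb_state \<Rightarrow> tb_state" where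
  "tb_step n i j s = (let
      x = xs s j;
      u' = used s j + x i * av s i;                                   \<comment> \<open>(1)\<close>
      a' = av s i + x i * u';                                         \<comment> \<open>(2)\<close>
      b' = (if u' = 1 then (\<lambda>k. if i < k \<and> k \<le> n then bs s i k + x k else bs s i k)
            else bs s i);                                              \<comment> \<open>(3)\<close>
      x' = (if x i = 1 then (\<lambda>k. if i < k \<and> k \<le> n then x k + b' k else x k)
            else x)                                                    \<comment> \<open>(4)\<close>
    in \<lparr> xs = (xs s)(j := x'), used = (used s)(j := u'),
         av = (av s)(i := a'), bs = (bs s)(i := b') \<rparr>)"

definition tb_init :: "(nat \<Rightarrow> vec) \<Rightarrow> tb_state" where
  "tb_init x = \<lparr> xs = x, used = (\<lambda>_. 0), av = (\<lambda>_. 1), bs = (\<lambda>_ _. 0) \<rparr>"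

definition tb_run :: "nat \<Rightarrow> nat \<Rightarrow> (nat \<Rightarrow> vec) \<Rightarrow> tb_state" where
  "tb_run n m x = fold (\<lambda>i s. fold (\<lambda>j. tb_step n i j) [1..<m+1] s) [1..<n+1] (tb_init x)"

definition tb_beta :: "nat \<Rightarrow> tb_state \<Rightarrow> nat \<Rightarrow> vec" where
  "tb_beta n s i = (\<lambda>k. if k = i then 1 + av s i
                        else if i < k \<and> k \<le> n then bs s i k else 0)"

definition f2_span :: "vec set \<Rightarrow> vec set" where
  "f2_span S = Modules.module.span (\<lambda>(c::bit) (v::vec) k. c * v k) S"

end

theory Submission
  imports Defs
begin

lemma bit_cases2: "(a::bit) = 0 \<or> a = 1"
  by (metis bit_not_zero_iff)

lemma bit_add_self [simp]: "(a::bit) + a = 0"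
  using bit_cases2[of a] by auto

interpretation F: vector_space "\<lambda>(c::bit) (v::vec) k. c * v k"
  by unfold_locales (auto simp: fun_eq_iff algebra_simps)

lemma f2_span_F: "f2_span S = F.span S"
  by (simp add: f2_span_def)

definition T :: "nat \<Rightarrow> nat \<Rightarrow> vec \<Rightarrow> vec" where
  "T n i v = (\<lambda>k. if i \<le> k \<and> k \<le> n then v k else 0)"

definition G :: "nat \<Rightarrow> nat \<Rightarrow> tb_state \<Rightarrow> nat \<Rightarrow> nat \<Rightarrow> vec set" where
  "G n m s i t = tb_beta n s ` {1..<i} \<union> {tb_beta n s i} \<union>
     (\<lambda>j. if j \<le> t then T n (Suc i) (xs s j) else T n i (xs s j)) ` {1..m}"

definition Rst :: "nat \<Rightarrow> nat \<Rightarrow> tb_state \<Rightarrow> nat \<Rightarrow> nat \<Rightarrow> vec set" where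
  "Rst n m s i j = tb_beta n s ` {1..<i} \<union>
     (\<lambda>j'. if j' < j then T n (Suc i) (xs s j') else T n i (xs s j')) ` ({1..m} - {j})"

definition Inv :: "nat \<Rightarrow> nat \<Rightarrow> tb_state \<Rightarrow> nat \<Rightarrow> nat \<Rightarrow> bool" where
  "Inv n m s i t \<longleftrightarrow>
    (\<forall>j\<in>{1..m}. used s j = 1 \<longrightarrow> (\<forall>k. (if j \<le> t then i < k else i \<le> k) \<longrightarrow> xs s j k = 0)) \<and>
    (av s i = 1 \<longrightarrow> (\<forall>k. i < k \<and> k \<le> n \<longrightarrow> bs s i k = 0)) \<and>
    (\<forall>r>i. av s r = 1 \<and> bs s r = (\<lambda>_. 0)) \<and>
    (\<forall>j\<in>{1..m}. \<forall>k>n. xs s j k = 0)"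

lemma image_split: "a \<in> A \<Longrightarrow> f ` A = insert (f a) (f ` (A - {a}))"
  by blast

lemma G_split:
  assumes "t < m"
  shows "G n m s i t = insert (tb_beta n s i) (insert (T n i (xs s (Suc t))) (Rst n m s i (Suc t)))"
proof -
  have "(\<lambda>j. if j \<le> t then T n (Suc i) (xs s j) else T n i (xs s j)) ` {1..m}
     = insert (T n i (xs s (Suc t))) ((\<lambda>j. if j \<le> t then T n (Suc i) (xs s j) else T n i (xs s j)) ` ({1..m} - {Suc t}))"
    by (subst image_split[of "Suc t"]) (use assms in auto)
  also have "(\<lambda>j. if j \<le> t then T n (Suc i) (xs s j) else T n i (xs s j)) ` ({1..m} - {Suc t})
       = (\<lambda>j'. if j' < Suc t then T n (Suc i) (xs s j') else T n i (xs s j')) ` ({1..m} - {Suc t})"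
      by (rule image_cong) auto
  finally show ?thesis unfolding G_def Rst_def by auto
qed

lemma G_split':
  assumes "t < m"
  shows "G n m s i (Suc t) = insert (tb_beta n s i) (insert (T n (Suc i) (xs s (Suc t))) (Rst n m s i (Suc t)))"
proof -
  have "(\<lambda>j. if j \<le> Suc t then T n (Suc i) (xs s j) else T n i (xs s j)) ` {1..m}
     = insert (T n (Suc i) (xs s (Suc t))) ((\<lambda>j. if j \<le> Suc t then T n (Suc i) (xs s j) else T n i (xs s j)) ` ({1..m} - {Suc t}))"
    by (subst image_split[of "Suc t"]) (use assms in auto)
  also have "(\<lambda>j. if j \<le> Suc t then T n (Suc i) (xs s j) else T n i (xs s j)) ` ({1..m} - {Suc t})
       = (\<lambda>j'. if j' < Suc t then T n (Suc i) (xs s j') else T n i (xs s j')) ` ({1..m} - {Suc t})"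
      by (rule image_cong) auto
  finally show ?thesis unfolding G_def Rst_def by auto
qed

lemma Rst_cong:
  assumes "\<And>j'. j' \<noteq> j \<Longrightarrow> xs s' j' = xs s j'"
    and "\<And>r. r < i \<Longrightarrow> av s' r = av s r \<and> bs s' r = bs s r"
  shows "Rst n m s' i j = Rst n m s i j"
proof -
  have "tb_beta n s' ` {1..<i} = tb_beta n s ` {1..<i}"
    by (rule image_cong) (use assms(2) in \<open>auto simp: tb_beta_def\<close>)
  moreover have "(\<lambda>j'. if j' < j then T n (Suc i) (xs s' j') else T n i (xs s' j')) ` ({1..m} - {j})
     = (\<lambda>j'. if j' < j then T n (Suc i) (xs s j') else T n i (xs s j')) ` ({1..m} - {j})"
    by (rule image_cong) (use assms(1) in auto)
  ultimately show ?thesis unfolding Rst_def by simp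
qed


lemma Inv_intro:
  assumes "\<forall>j'\<in>{1..m}. j' \<noteq> j \<longrightarrow> used s j' = 1 \<longrightarrow> (\<forall>k. (if j' \<le> t then i < k else i \<le> k) \<longrightarrow> xs s j' k = 0)"
    and "used s j = 1 \<longrightarrow> (\<forall>k. i < k \<longrightarrow> xs s j k = 0)"
    and "j \<le> t"
    and "av s i = 1 \<longrightarrow> (\<forall>k. i < k \<and> k \<le> n \<longrightarrow> bs s i k = 0)"
    and "\<forall>r>i. av s r = 1 \<and> bs s r = (\<lambda>_. 0)"
    and "\<forall>j\<in>{1..m}. \<forall>k>n. xs s j k = 0"
  shows "Inv n m s i t"
proof -
  have "\<forall>j'\<in>{1..m}. used s j' = 1 \<longrightarrow> (\<forall>k. (if j' \<le> t then i < k else i \<le> k) \<longrightarrow> xs s j' k = 0)"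
  proof (intro ballI impI allI)
    fix j' k assume h: "j' \<in> {1..m}" "used s j' = 1" "if j' \<le> t then i < k else i \<le> k"
    show "xs s j' k = 0"
    proof (cases "j' = j")
      case True
      then have "i < k" using h(3) assms(3) by simp
      then show ?thesis using assms(2) h(2) True by blast
    next
      case False
      then show ?thesis using assms(1) h by blast
    qed
  qed
  then show ?thesis using assms(4-6) unfolding Inv_def by blast
qed

lemma step:
  assumes I: "Inv n m s i t" and i1: "1 \<le> i" and iN: "i \<le> n" and tm: "t < m"
    and j: "j = Suc t"
  shows "Inv n m (tb_step n i j s) i (Suc t) \<and>
         F.span (G n m (tb_step n i j s) i (Suc t)) = F.span (G n m s i t)"
proof -
  define s' where "s' = tb_step n i j s"
  define x where "x = xs s j"
  have jm: "j \<in> {1..m}" using tm j by auto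
  have xs_o: "\<And>j'. j' \<noteq> j \<Longrightarrow> xs s' j' = xs s j'"
    and used_o: "\<And>j'. j' \<noteq> j \<Longrightarrow> used s' j' = used s j'"
    and av_o: "\<And>r. r \<noteq> i \<Longrightarrow> av s' r = av s r"
    and bs_o: "\<And>r. r \<noteq> i \<Longrightarrow> bs s' r = bs s r"
    by (simp_all add: s'_def tb_step_def Let_def)
  have xs_big: "\<And>k. n < k \<Longrightarrow> xs s' j k = x k"
    by (simp add: s'_def tb_step_def Let_def x_def[symmetric])
  have R: "Rst n m s' i j = Rst n m s i j"
    by (rule Rst_cong) (auto simp: xs_o av_o bs_o)
  have Gs: "G n m s i t = insert (tb_beta n s i) (insert (T n i x) (Rst n m s i j))"
    using G_split[OF tm, of n s i] j x_def by simp
  have Gs': "G n m s' i (Suc t) = insert (tb_beta n s' i) (insert (T n (Suc i) (xs s' j)) (Rst n m s i j))"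
    using G_split'[OF tm, of n s' i] R j by simp
  have Ia: "\<forall>j\<in>{1..m}. used s j = 1 \<longrightarrow> (\<forall>k. (if j \<le> t then i < k else i \<le> k) \<longrightarrow> xs s j k = 0)"
    and Ib: "av s i = 1 \<longrightarrow> (\<forall>k. i < k \<and> k \<le> n \<longrightarrow> bs s i k = 0)"
    and Ic: "\<forall>r>i. av s r = 1 \<and> bs s r = (\<lambda>_. 0)"
    and Id: "\<forall>j\<in>{1..m}. \<forall>k>n. xs s j k = 0"
    using I unfolding Inv_def by auto
  have xj: "used s j = 1 \<Longrightarrow> k \<ge> i \<Longrightarrow> x k = 0" for k
    using Ia jm j x_def by auto
  have xn: "k > n \<Longrightarrow> x k = 0" for k using Id jm x_def by auto
  have Ia': "\<forall>j'\<in>{1..m}. j' \<noteq> j \<longrightarrow> used s' j' = 1 \<longrightarrow> (\<forall>k. (if j' \<le> Suc t then i < k else i \<le> k) \<longrightarrow> xs s' j' k = 0)"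
    using Ia j by (auto simp: xs_o used_o)
  have Ic': "\<forall>r>i. av s' r = 1 \<and> bs s' r = (\<lambda>_. 0)"
    using Ic by (simp add: av_o bs_o)
  have Id': "\<forall>j\<in>{1..m}. \<forall>k>n. xs s' j k = 0"
    using Id xn xs_o xs_big by metis
  have jt: "j \<le> Suc t" using j by simp
  consider (A) "x i = 0" | (C) "x i = 1" "used s j = 0" "av s i = 1"
    | (D) "x i = 1" "used s j = 0" "av s i = 0" | (B) "x i = 1" "used s j = 1"
    using bit_cases2 by metis
  then have "(used s' j = 1 \<longrightarrow> (\<forall>k. i < k \<longrightarrow> xs s' j k = 0)) \<and>
    (av s' i = 1 \<longrightarrow> (\<forall>k. i < k \<and> k \<le> n \<longrightarrow> bs s' i k = 0)) \<and>
    F.span (G n m s' i (Suc t)) = F.span (G n m s i t)"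
  proof cases
    case A
    have u': "used s' j = used s j" and a': "av s' i = av s i" and x': "xs s' j = x"
      using A by (simp_all add: s'_def tb_step_def Let_def x_def[symmetric])
    have b': "bs s' i = bs s i"
    proof (cases "used s j = 1")
      case True
      then show ?thesis using A xj[OF True]
        by (auto simp: s'_def tb_step_def Let_def x_def[symmetric] fun_eq_iff)
    next
      case False
      then show ?thesis using A by (simp add: s'_def tb_step_def Let_def x_def[symmetric])
    qed
    have "tb_beta n s' i = tb_beta n s i" unfolding tb_beta_def a' b' by (rule refl)
    moreover have "T n (Suc i) x = T n i x" using A by (auto simp: T_def fun_eq_iff le_less)
    ultimately show ?thesis using Gs Gs' x' u' a' b' Ib xj by auto
  next
    case C
    have u': "used s' j = 1" and a': "av s' i = 0"
      using C by (simp_all add: s'_def tb_step_def Let_def x_def[symmetric])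
    have b': "bs s' i = (\<lambda>k. if i < k \<and> k \<le> n then bs s i k + x k else bs s i k)"
      using C by (simp add: s'_def tb_step_def Let_def x_def[symmetric])
    have x': "xs s' j = (\<lambda>k. if i < k \<and> k \<le> n then x k + (bs s i k + x k) else x k)"
      using C by (auto simp: s'_def tb_step_def Let_def x_def[symmetric] fun_eq_iff)
    have b0: "i < k \<Longrightarrow> k \<le> n \<Longrightarrow> bs s i k = 0" for k using Ib C by auto
    have x'0: "i < k \<Longrightarrow> xs s' j k = 0" for k using x' b0 xn by (auto simp: add.assoc[symmetric])
    have g0: "tb_beta n s i = 0" using C b0 by (auto simp: tb_beta_def fun_eq_iff)
    have g': "tb_beta n s' i = T n i x"
      using C b0 iN a' by (auto simp: tb_beta_def T_def fun_eq_iff b')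
    have T0: "T n (Suc i) (xs s' j) = 0" using x'0 by (auto simp: T_def fun_eq_iff)
    have "G n m s' i (Suc t) = G n m s i t" using Gs Gs' g0 g' T0 by (simp add: insert_commute)
    then show ?thesis using x'0 a' by simp
  next
    case D
    have u': "used s' j = 0" and a': "av s' i = 0" and b': "bs s' i = bs s i"
      using D by (simp_all add: s'_def tb_step_def Let_def x_def[symmetric])
    have x': "xs s' j = (\<lambda>k. if i < k \<and> k \<le> n then x k + bs s i k else x k)"
      using D by (simp add: s'_def tb_step_def Let_def x_def[symmetric])
    have g': "tb_beta n s' i = tb_beta n s i" unfolding tb_beta_def a' b' D(3) by (rule refl)
    have T': "T n (Suc i) (xs s' j) = T n i x + tb_beta n s i"
      using D iN by (auto simp: T_def tb_beta_def fun_eq_iff x')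
    have "F.span (insert (T n i x + tb_beta n s i) (insert (tb_beta n s i) (Rst n m s i j)))
        = F.span (insert (T n i x) (insert (tb_beta n s i) (Rst n m s i j)))"
      by (rule F.eq_span_insert_eq, subst add_diff_cancel_left', rule F.span_base, rule insertI1)
    moreover have "G n m s' i (Suc t) = insert (T n i x + tb_beta n s i) (insert (tb_beta n s i) (Rst n m s i j))"
      unfolding Gs' g' T' by (rule insert_commute)
    moreover have "G n m s i t = insert (T n i x) (insert (tb_beta n s i) (Rst n m s i j))"
      unfolding Gs by (rule insert_commute)
    ultimately have "F.span (G n m s' i (Suc t)) = F.span (G n m s i t)" by simp
    then show ?thesis using u' a' by simp
  next
    case B
    then show ?thesis using xj[of i] by simp
  qed
  then have P2: "used s' j = 1 \<longrightarrow> (\<forall>k. i < k \<longrightarrow> xs s' j k = 0)"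
    and P4: "av s' i = 1 \<longrightarrow> (\<forall>k. i < k \<and> k \<le> n \<longrightarrow> bs s' i k = 0)"
    and P5: "F.span (G n m s' i (Suc t)) = F.span (G n m s i t)" by blast+
  have "Inv n m s' i (Suc t)" by (rule Inv_intro[OF Ia' P2 jt P4 Ic' Id'])
  with P5 show ?thesis unfolding s'_def by blast
qed


lemma inner:
  assumes I0: "Inv n m s0 i 0" and i1: "1 \<le> i" and iN: "i \<le> n"
  shows "t \<le> m \<Longrightarrow> Inv n m (fold (\<lambda>j. tb_step n i j) [1..<t+1] s0) i t \<and>
     F.span (G n m (fold (\<lambda>j. tb_step n i j) [1..<t+1] s0) i t) = F.span (G n m s0 i 0)"
proof (induction t)
  case 0
  then show ?case using I0 by simp
next
  case (Suc t)
  have f: "fold (\<lambda>j. tb_step n i j) [1..<Suc t+1] s0 = tb_step n i (Suc t) (fold (\<lambda>j. tb_step n i j) [1..<t+1] s0)"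
    by simp
  from Suc have IH: "Inv n m (fold (\<lambda>j. tb_step n i j) [1..<t+1] s0) i t"
     "F.span (G n m (fold (\<lambda>j. tb_step n i j) [1..<t+1] s0) i t) = F.span (G n m s0 i 0)" by auto
  from step[OF IH(1) i1 iN _ refl] Suc.prems IH(2) show ?case unfolding f by simp
qed

lemma next_round:
  assumes I: "Inv n m s i m" and i1: "1 \<le> i"
  shows "Inv n m s (Suc i) 0 \<and> F.span (G n m s (Suc i) 0) = F.span (G n m s i m)"
proof -
  have Ic: "\<forall>r>i. av s r = 1 \<and> bs s r = (\<lambda>_. 0)" using I unfolding Inv_def by blast
  have b0: "tb_beta n s (Suc i) = 0" using Ic by (auto simp: tb_beta_def fun_eq_iff)
  have e1: "{1..<Suc i} = insert i {1..<i}" using i1 by auto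
  have e2: "(\<lambda>j. if j \<le> 0 then T n (Suc (Suc i)) (xs s j) else T n (Suc i) (xs s j)) ` {1..m}
      = (\<lambda>j. if j \<le> m then T n (Suc i) (xs s j) else T n i (xs s j)) ` {1..m}"
    by (rule image_cong) auto
  have "G n m s (Suc i) 0 = insert 0 (G n m s i m)"
    unfolding G_def e1 e2 b0 by auto
  then have sp: "F.span (G n m s (Suc i) 0) = F.span (G n m s i m)" by (simp only: F.span_insert_0)
  have "Inv n m s (Suc i) 0" using I unfolding Inv_def
    by (auto simp: Suc_le_eq)
  with sp show ?thesis by blast
qed

lemma T_top: "T n (Suc n) v = 0"
  by (auto simp: T_def fun_eq_iff)

theorem mainTheorem1:
  fixes n m :: nat and x :: "nat \<Rightarrow> vec"
  assumes "n \<ge> 1" and "m \<ge> 1"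
    and "\<forall>j\<in>{1..m}. \<forall>k. k \<notin> {1..n} \<longrightarrow> x j k = 0"
  shows "f2_span (x ` {1..m}) = f2_span (tb_beta n (tb_run n m x) ` {1..n})"
proof -
  define R where "R k = fold (\<lambda>i s. fold (\<lambda>j. tb_step n i j) [1..<m+1] s) [1..<k+1] (tb_init x)" for k
  have RS: "R (Suc k) = fold (\<lambda>j. tb_step n (Suc k) j) [1..<m+1] (R k)" for k
    unfolding R_def by simp
  have base_inv: "Inv n m (tb_init x) 1 0"
    using assms(3) by (auto simp: Inv_def tb_init_def)
  have base_G: "G n m (tb_init x) 1 0 = insert 0 (x ` {1..m})"
  proof -
    have "tb_beta n (tb_init x) 1 = 0" by (auto simp: tb_beta_def tb_init_def fun_eq_iff)
    moreover have "(\<lambda>j. if j \<le> 0 then T n (Suc 1) (xs (tb_init x) j) else T n 1 (xs (tb_init x) j)) ` {1..m}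
        = x ` {1..m}"
      by (rule image_cong) (use assms(3) in \<open>auto simp: T_def tb_init_def fun_eq_iff\<close>)
    ultimately show ?thesis unfolding G_def by auto
  qed
  have claim: "1 \<le> k \<Longrightarrow> k \<le> n \<Longrightarrow> Inv n m (R (k - 1)) k 0 \<and>
      F.span (x ` {1..m}) = F.span (G n m (R (k - 1)) k 0)" for k
  proof (induction k)
    case 0 then show ?case by simp
  next
    case (Suc k)
    show ?case
    proof (cases "k = 0")
      case True
      then show ?thesis using base_inv base_G F.span_insert_0[of "x ` {1..m}"] by (simp add: R_def)
    next
      case False
      then have IH: "Inv n m (R (k - 1)) k 0" "F.span (x ` {1..m}) = F.span (G n m (R (k - 1)) k 0)"
        using Suc by auto
      have Rk: "R k = fold (\<lambda>j. tb_step n k j) [1..<m+1] (R (k - 1))"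
        using RS[of "k - 1"] False by simp
      have A: "Inv n m (R k) k m \<and> F.span (G n m (R k) k m) = F.span (G n m (R (k - 1)) k 0)"
        unfolding Rk using inner[OF IH(1), of m] False Suc.prems by simp
      have B: "Inv n m (R k) (Suc k) 0 \<and> F.span (G n m (R k) (Suc k) 0) = F.span (G n m (R k) k m)"
        using next_round[of n m "R k" k] A False by simp
      show ?thesis using A B IH(2) by simp
    qed
  qed
  from claim[of n] assms(1) have C: "Inv n m (R (n - 1)) n 0"
    "F.span (x ` {1..m}) = F.span (G n m (R (n - 1)) n 0)" by auto
  have Rn: "R n = fold (\<lambda>j. tb_step n n j) [1..<m+1] (R (n - 1))"
    using RS[of "n - 1"] assms(1) by simp
  have run: "tb_run n m x = R n" unfolding tb_run_def R_def by simp
  have D: "F.span (G n m (R n) n m) = F.span (G n m (R (n - 1)) n 0)"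
    unfolding Rn using inner[OF C(1), of m] assms(1) by simp
  have e: "(\<lambda>j. if j \<le> m then T n (Suc n) (xs (R n) j) else T n n (xs (R n) j)) ` {1..m} = {0}"
    using assms(2) by (auto simp: T_top)
  have "G n m (R n) n m = insert 0 (tb_beta n (R n) ` {1..n})"
  proof -
    have e3: "{1..n} = insert n {1..<n}" using assms(1) by auto
    show ?thesis unfolding G_def e e3 by auto
  qed
  then show ?thesis unfolding f2_span_F run using C(2) D F.span_insert_0[of "tb_beta n (R n) ` {1..n}"] by simp
qed

end
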